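(* For every $(g,n)\in Q\rtimes\mathbb{Z}$ we have $\det\bigl((g,n);\tau_q\bigr)=q^{-n}$.
   Context: All representations are over $\overline{\mathbb{Q}}_\ell$, $\ell$ an odd prime. Let $q=2^f$ with $f\ge1$. Let $Q\subset \mathit{GL}_3(\mathbb{F}_4)$ be the group of matrices $g(\alpha,\beta,\gamma)=\begin{pmatrix}\alpha&\beta&\gamma\\0&\alpha^2&\beta^2\\0&0&\alpha\end{pmatrix}$ with $\alpha\in\mathbb{F}_4^\times$, $\beta,\gamma\in\mathbb{F}_4$, $\alpha\gamma^2+\alpha^2\gamma=\beta^3$. Let $Q\rtimes\mathbb{Z}$ be the semidirect product where $r\in\mathbb{Z}$ acts by $g(\alpha,\beta,\gamma)\mapsto g(\alpha^{q^r},\beta^{q^r},\gamma^{q^r})$. Fix $\bar\zeta_3\in\mathbb{F}_4\setminus\mathbb{F}_2$. Let $Q_8=\{g(1,\beta,\gamma)\in Q\}$; $C_4\subset Q_8$ the cyclic subgroup of order 4 generated by $g(1,1,\bar\zeta_3)$; $Z=\{g(1,0,0),g(1,0,1)\}$; $C_3=\{g(\alpha,0,0)\}$; $C_6=Z\times C_3$. Fix a faithful character $\phi$ of $C_4$; let $\tau$ be the unique irreducible two-dimensional representation of $Q$ with $\tau|_Z\simeq(\phi|_Z)^{\oplus2}$ and $\operatorname{Tr}\tau(g(\alpha,0,0))=-1$ for $\alpha\in\mathbb{F}_4\setminus\mathbb{F}_2$. Fix $(-2)^{1/2}\in\overline{\mathbb{Q}}_\ell$, with $(-2)^{m/2}=((-2)^{1/2})^m$.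 The representation $\tau_q$ of $Q\rtimes\mathbb{Z}$ is defined as follows. If $f$ is even, $Q\rtimes\mathbb{Z}=Q\times\mathbb{Z}$ and $\tau_q$ is the representation with $\tau_q|_Q\simeq\tau$ and $(g(1,0,0),1)$ acting by the scalar $(-2)^{-f/2}$. If $f$ is odd: let $C\subset Q_8\rtimes\mathbb{Z}$ be the subgroup of $(g,n)$ with $g\in C_4$ if $n$ even and $g\in Q_8\setminus C_4$ if $n$ odd; fix $\eta$ with $\eta^2+(-2)^{(f+1)/2}\eta+q=0$; let $\phi_1$ be the character of $C$ with $\phi_1((g(1,\bar\zeta_3,\bar\zeta_3),1))=\eta q^{-1}$, $\phi_1((g(1,0,0),2))=-q^{-1}$; let $\phi_2$ be the character of $C_6\rtimes\mathbb{Z}$ with $\phi_2|_{C_6}=\phi|_Z\otimes1_{C_3}$ and $\phi_2((g(1,0,0),1))=(-2)^{f/2}q^{-1}$; there is a surjective $Q\rtimes\mathbb{Z}$-homomorphism $\Psi\colon\operatorname{Ind}_C^{Q\rtimes\mathbb{Z}}\phi_1\to\operatorname{Ind}_{C_6\rtimes\mathbb{Z}}^{Q\rtimes\mathbb{Z}}\phi_2$, unique up to scalar, and $\tau_q:=\ker\Psi$ (two-dimensional). *)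

theory Defs
  imports "HOL-Analysis.Analysis" "HOL-Computational_Algebra.Polynomial"
begin

text \<open>F4 = {0, 1, z, z2} where z is the fixed element zeta3-bar of F4 outside F2, and z2 = z^2 = z + 1.\<close>
datatype F4 = F0 | F1 | Fz | Fz2

fun f4_add :: "F4 \<Rightarrow> F4 \<Rightarrow> F4" where
  "f4_add F0 x = x"
| "f4_add x F0 = x"
| "f4_add F1 F1 = F0"
| "f4_add F1 Fz = Fz2"
| "f4_add F1 Fz2 = Fz"
| "f4_add Fz F1 = Fz2"
| "f4_add Fz Fz = F0"
| "f4_add Fz Fz2 = F1"
| "f4_add Fz2 F1 = Fz"
| "f4_add Fz2 Fz = F1"
| "f4_add Fz2 Fz2 = F0"

fun f4_mul :: "F4 \<Rightarrow> F4 \<Rightarrow> F4" where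
  "f4_mul F0 x = F0"
| "f4_mul x F0 = F0"
| "f4_mul F1 x = x"
| "f4_mul x F1 = x"
| "f4_mul Fz Fz = Fz2"
| "f4_mul Fz Fz2 = F1"
| "f4_mul Fz2 Fz = F1"
| "f4_mul Fz2 Fz2 = Fz"

definition f4_sq :: "F4 \<Rightarrow> F4" where "f4_sq x = f4_mul x x"
definition f4_cube :: "F4 \<Rightarrow> F4" where "f4_cube x = f4_mul x (f4_sq x)"

text \<open>The action of r in Z on F4: x \<mapsto> x^(q^r) with q = 2^f. Since the Frobenius x \<mapsto> x^2
  is an involution of F4, this is the identity if f*r is even and the Frobenius otherwise
  (for negative r, x^(q^r) means the r-th power of the automorphism x \<mapsto> x^q).\<close>
definition f4_act :: "nat \<Rightarrow> int \<Rightarrow> F4 \<Rightarrow> F4" where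
  "f4_act f r x = (if even (int f * r) then x else f4_sq x)"

type_synonym mat3 = "nat \<Rightarrow> nat \<Rightarrow> F4"

definition mmul :: "mat3 \<Rightarrow> mat3 \<Rightarrow> mat3" where
  "mmul A B = (\<lambda>i j. if i < 3 \<and> j < 3 then
      f4_add (f4_mul (A i 0) (B 0 j)) (f4_add (f4_mul (A i 1) (B 1 j)) (f4_mul (A i 2) (B 2 j)))
    else F0)"

definition gm :: "F4 \<Rightarrow> F4 \<Rightarrow> F4 \<Rightarrow> mat3" where
  "gm a b c = (\<lambda>i j.
     if i = 0 \<and> j = 0 then a else if i = 0 \<and> j = 1 then b else if i = 0 \<and> j = 2 then c
     else if i = 1 \<and> j = 1 then f4_sq a else if i = 1 \<and> j = 2 then f4_sq b
     else if i = 2 \<and> j = 2 then a else F0)"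

definition Qgrp :: "mat3 set" where
  "Qgrp = {gm a b c | a b c. a \<noteq> F0 \<and>
            f4_add (f4_mul a (f4_sq c)) (f4_mul (f4_sq a) c) = f4_cube b}"

definition one3 :: mat3 where "one3 = gm F1 F0 F0"

fun mpow :: "mat3 \<Rightarrow> nat \<Rightarrow> mat3" where
  "mpow A 0 = one3"
| "mpow A (Suc n) = mmul A (mpow A n)"

definition Q8 :: "mat3 set" where "Q8 = {M \<in> Qgrp. \<exists>b c. M = gm F1 b c}"
definition C4 :: "mat3 set" where "C4 = {mpow (gm F1 F1 Fz) k | k. k < 4}"
definition Zc :: "mat3 set" where "Zc = {gm F1 F0 F0, gm F1 F0 F1}"
definition C3 :: "mat3 set" where "C3 = {gm a F0 F0 | a. a \<noteq> F0}"
definition C6 :: "mat3 set" where "C6 = {mmul z c | z c. z \<in> Zc \<and> c \<in> C3}"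

definition mact :: "nat \<Rightarrow> int \<Rightarrow> mat3 \<Rightarrow> mat3" where
  "mact f r M = (\<lambda>i j. f4_act f r (M i j))"

definition Gset :: "nat \<Rightarrow> (mat3 \<times> int) set" where
  "Gset f = {(M, n). M \<in> Qgrp}"

definition gmul :: "nat \<Rightarrow> mat3 \<times> int \<Rightarrow> mat3 \<times> int \<Rightarrow> mat3 \<times> int" where
  "gmul f x y = (mmul (fst x) (mact f (snd x) (fst y)), snd x + snd y)"

definition is_character :: "(('a \<Rightarrow> 'a \<Rightarrow> 'a)) \<Rightarrow> 'a set \<Rightarrow> ('a \<Rightarrow> 'k::field) \<Rightarrow> bool" where
  "is_character mul H chr \<longleftrightarrow> (\<forall>x\<in>H. chr x \<noteq> 0) \<and> (\<forall>x\<in>H. \<forall>y\<in>H. chr (mul x y) = chr x * chr y)"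

definition faithful_char_C4 :: "(mat3 \<Rightarrow> 'k::field) \<Rightarrow> bool" where
  "faithful_char_C4 \<phi> \<longleftrightarrow> is_character mmul C4 \<phi> \<and> inj_on \<phi> C4"

definition is_rep2 :: "('a \<Rightarrow> 'a \<Rightarrow> 'a) \<Rightarrow> 'a set \<Rightarrow> ('a \<Rightarrow> 'k::field^2^2) \<Rightarrow> bool" where
  "is_rep2 mul H \<rho> \<longleftrightarrow> (\<forall>x\<in>H. invertible (\<rho> x)) \<and> (\<forall>x\<in>H. \<forall>y\<in>H. \<rho> (mul x y) = \<rho> x ** \<rho> y)"

definition invariant_subspace :: "'a set \<Rightarrow> ('a \<Rightarrow> 'k::field^'n^'n) \<Rightarrow> ('k^'n) set \<Rightarrow> bool" where
  "invariant_subspace H \<rho> W \<longleftrightarrow> 0 \<in> W \<and> (\<forall>v\<in>W. \<forall>w\<in>W. v + w \<in> W) \<and> (\<forall>c. \<forall>v\<in>W. c *s v \<in> W)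
      \<and> (\<forall>h\<in>H. \<forall>v\<in>W. \<rho> h *v v \<in> W)"

definition irreducible_rep :: "'a set \<Rightarrow> ('a \<Rightarrow> 'k::field^'n^'n) \<Rightarrow> bool" where
  "irreducible_rep H \<rho> \<longleftrightarrow> \<not> (\<exists>W. invariant_subspace H \<rho> W \<and> W \<noteq> {0} \<and> W \<noteq> UNIV)"

section \<open>The case f even: tau_q with tau_q|_Q = tau\<close>

definition tau_q_even :: "nat \<Rightarrow> 'k::field \<Rightarrow> (mat3 \<Rightarrow> 'k) \<Rightarrow> (mat3 \<times> int \<Rightarrow> 'k^2^2) \<Rightarrow> bool" where
  "tau_q_even f s \<phi> \<rho> \<longleftrightarrow>
     is_rep2 (gmul f) (Gset f) \<rho>
   \<and> irreducible_rep {(M, 0) | M. M \<in> Qgrp} \<rho>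
   \<and> (\<forall>z\<in>Zc. \<rho> (z, 0) = mat (\<phi> z))
   \<and> (\<forall>a\<in>{Fz, Fz2}. trace (\<rho> (gm a F0 F0, 0)) = -1)
   \<and> \<rho> (gm F1 F0 F0, 1) = mat (inverse (s ^ f))"

section \<open>The case f odd: tau_q = ker Psi\<close>

definition Cgrp :: "nat \<Rightarrow> (mat3 \<times> int) set" where
  "Cgrp f = {(M, n). M \<in> Q8 \<and> (even n \<longrightarrow> M \<in> C4) \<and> (odd n \<longrightarrow> M \<notin> C4)}"

definition C6Z :: "(mat3 \<times> int) set" where
  "C6Z = {(M, n). M \<in> C6}"

text \<open>Induced representation Ind_H^G chi, realised as functions F on G (zero off G) with
  F(h x) = chi(h) F(x); G acts by right translation.\<close>
definition Ind :: "nat \<Rightarrow> (mat3 \<times> int) set \<Rightarrow> (mat3 \<times> int \<Rightarrow> 'k::field) \<Rightarrow> (mat3 \<times> int \<Rightarrow> 'k) set" where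
  "Ind f H chr = {F. (\<forall>x. x \<notin> Gset f \<longrightarrow> F x = 0) \<and>
                    (\<forall>h\<in>H. \<forall>x\<in>Gset f. F (gmul f h x) = chr h * F x)}"

definition transl :: "nat \<Rightarrow> mat3 \<times> int \<Rightarrow> (mat3 \<times> int \<Rightarrow> 'k::field) \<Rightarrow> (mat3 \<times> int \<Rightarrow> 'k)" where
  "transl f x F = (\<lambda>y. if y \<in> Gset f then F (gmul f y x) else 0)"

definition G_hom :: "nat \<Rightarrow> (mat3 \<times> int \<Rightarrow> 'k::field) set \<Rightarrow> (mat3 \<times> int \<Rightarrow> 'k) set
     \<Rightarrow> ((mat3 \<times> int \<Rightarrow> 'k) \<Rightarrow> (mat3 \<times> int \<Rightarrow> 'k)) \<Rightarrow> bool" where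
  "G_hom f V W \<Psi> \<longleftrightarrow> (\<forall>F\<in>V. \<Psi> F \<in> W)
     \<and> (\<forall>F\<in>V. \<forall>F'\<in>V. \<Psi> (\<lambda>y. F y + F' y) = (\<lambda>y. \<Psi> F y + \<Psi> F' y))
     \<and> (\<forall>c. \<forall>F\<in>V. \<Psi> (\<lambda>y. c * F y) = (\<lambda>y. c * \<Psi> F y))
     \<and> (\<forall>x\<in>Gset f. \<forall>F\<in>V. \<Psi> (transl f x F) = transl f x (\<Psi> F))"

text \<open>rho is the matrix of the action of Q \<rtimes> Z on ker Psi with respect to a basis (B1, B2) of ker Psi.\<close>
definition tau_q_odd :: "nat \<Rightarrow> 'k::field \<Rightarrow> (mat3 \<Rightarrow> 'k) \<Rightarrow> 'k \<Rightarrow> (mat3 \<times> int \<Rightarrow> 'k) \<Rightarrow> (mat3 \<times> int \<Rightarrow> 'k)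
     \<Rightarrow> ((mat3 \<times> int \<Rightarrow> 'k) \<Rightarrow> (mat3 \<times> int \<Rightarrow> 'k)) \<Rightarrow> (mat3 \<times> int \<Rightarrow> 'k) \<Rightarrow> (mat3 \<times> int \<Rightarrow> 'k)
     \<Rightarrow> (mat3 \<times> int \<Rightarrow> 'k^2^2) \<Rightarrow> bool" where
  "tau_q_odd f s \<phi> \<eta> \<phi>1 \<phi>2 \<Psi> B1 B2 \<rho> \<longleftrightarrow>
     (let q = (of_nat (2 ^ f) :: 'k); K = {F \<in> Ind f (Cgrp f) \<phi>1. (\<forall>y. \<Psi> F y = 0)} in
       \<eta>^2 + s ^ (f + 1) * \<eta> + q = 0
     \<and> is_character (gmul f) (Cgrp f) \<phi>1
     \<and> \<phi>1 (gm F1 Fz Fz, 1) = \<eta> / q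
     \<and> \<phi>1 (gm F1 F0 F0, 2) = - 1 / q
     \<and> is_character (gmul f) C6Z \<phi>2
     \<and> (\<forall>z\<in>Zc. \<forall>c\<in>C3. \<phi>2 (mmul z c, 0) = \<phi> z)
     \<and> \<phi>2 (gm F1 F0 F0, 1) = s ^ f / q
     \<and> G_hom f (Ind f (Cgrp f) \<phi>1) (Ind f C6Z \<phi>2) \<Psi>
     \<and> \<Psi> ` (Ind f (Cgrp f) \<phi>1) = Ind f C6Z \<phi>2
     \<and> B1 \<in> K \<and> B2 \<in> K
     \<and> (\<forall>a b. (\<lambda>y. a * B1 y + b * B2 y) = (\<lambda>y. 0) \<longrightarrow> a = 0 \<and> b = 0)
     \<and> (\<forall>F\<in>K. \<exists>a b. F = (\<lambda>y. a * B1 y + b * B2 y))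
     \<and> (\<forall>x\<in>Gset f. transl f x B1 = (\<lambda>y. \<rho> x $ 1 $ 1 * B1 y + \<rho> x $ 2 $ 1 * B2 y)
                 \<and> transl f x B2 = (\<lambda>y. \<rho> x $ 1 $ 2 * B1 y + \<rho> x $ 2 $ 2 * B2 y)))"

end

theory Submission
  imports Defs
begin

instantiation F4 :: comm_ring_1
begin
definition zero_F4_def: "0 = F0"
definition one_F4_def: "1 = F1"
definition plus_F4_def: "x + y = f4_add x y"
definition times_F4_def: "x * y = f4_mul x y"
definition uminus_F4_def: "- (x::F4) = x"
definition minus_F4_def: "x - y = f4_add x y"
instance
proof
  fix a b c :: F4
  show "a * b * c = a * (b * c)" unfolding times_F4_def by (cases a; cases b; cases c) auto
  show "a * b = b * a" unfolding times_F4_def by (cases a; cases b) auto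
  show "1 * a = a" unfolding times_F4_def one_F4_def by (cases a) auto
  show "a + b + c = a + (b + c)" unfolding plus_F4_def by (cases a; cases b; cases c) auto
  show "a + b = b + a" unfolding plus_F4_def by (cases a; cases b) auto
  show "0 + a = a" unfolding plus_F4_def zero_F4_def by (cases a) auto
  show "- a + a = 0" unfolding plus_F4_def zero_F4_def uminus_F4_def by (cases a) auto
  show "a - b = a + - b" unfolding plus_F4_def minus_F4_def uminus_F4_def by simp
  show "(a + b) * c = a * c + b * c" unfolding plus_F4_def times_F4_def by (cases a; cases b; cases c) auto
  show "(0::F4) \<noteq> 1" unfolding zero_F4_def one_F4_def by simp
qed
end

lemma f4_add_eq: "f4_add x y = x + y" by (simp add: plus_F4_def)
lemma f4_mul_eq: "f4_mul x y = x * y" by (simp add: times_F4_def)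
lemma F0_eq: "F0 = 0" by (simp add: zero_F4_def)
lemma F1_eq: "F1 = 1" by (simp add: one_F4_def)

lemma sq_add: "f4_sq (x + y) = f4_sq x + f4_sq y"
  unfolding f4_sq_def plus_F4_def by (cases x; cases y) auto
lemma sq_mul: "f4_sq (x * y) = f4_sq x * f4_sq y"
  unfolding f4_sq_def times_F4_def by (cases x; cases y) auto
lemma sq_sq: "f4_sq (f4_sq x) = x"
  unfolding f4_sq_def by (cases x) auto
lemma sq_0: "f4_sq F0 = F0" by (simp add: f4_sq_def)

lemma gm_mult: "mmul (gm a b c) (gm a' b' c') =
   gm (a*a') (a*b' + b*f4_sq a') (a*c' + b*f4_sq b' + c*a')"
proof -
  have z: "\<And>x::F4. x * 0 = 0" "\<And>x::F4. 0 * x = 0" "\<And>x::F4. x + 0 = x" "\<And>x::F4. 0 + x = x" by simp_all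
  show ?thesis
  unfolding mmul_def
  apply (rule ext)+
  subgoal for i j
    apply (cases "i < 3 \<and> j < 3")
     apply (auto simp: gm_def f4_add_eq f4_mul_eq F0_eq sq_add sq_mul sq_sq algebra_simps
           numeral_3_eq_3 less_Suc_eq)
    done
  done
qed

lemma mmul_assoc: "mmul (mmul A B) C = mmul A (mmul B C)"
  unfolding mmul_def
  apply (rule ext)+
  apply (auto simp: f4_add_eq f4_mul_eq algebra_simps)
  done

lemma gm_inj: "gm a b c = gm a' b' c' \<longleftrightarrow> a = a' \<and> b = b' \<and> c = c'"
proof
  assume h: "gm a b c = gm a' b' c'"
  have "gm a b c 0 0 = gm a' b' c' 0 0" "gm a b c 0 1 = gm a' b' c' 0 1" "gm a b c 0 2 = gm a' b' c' 0 2"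
    using h by simp_all
  then show "a = a' \<and> b = b' \<and> c = c'" by (simp add: gm_def)
qed simp

lemma gm_Q: "gm a b c \<in> Qgrp \<longleftrightarrow> a \<noteq> F0 \<and>
            f4_add (f4_mul a (f4_sq c)) (f4_mul (f4_sq a) c) = f4_cube b"
  unfolding Qgrp_def by (auto simp: gm_inj)

lemma Qgrp_gm: "M \<in> Qgrp \<Longrightarrow> \<exists>a b c. M = gm a b c \<and> gm a b c \<in> Qgrp"
  using gm_Q unfolding Qgrp_def by auto

lemma act_sq: "f4_act f r (f4_sq x) = f4_sq (f4_act f r x)"
  by (simp add: f4_act_def)
lemma act_0: "f4_act f r F0 = F0"
  by (simp add: f4_act_def f4_sq_def)

lemma mact_gm: "mact f r (gm a b c) = gm (f4_act f r a) (f4_act f r b) (f4_act f r c)"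
  unfolding mact_def gm_def by (rule ext)+ (auto simp: act_sq act_0)

lemma act_even: "even (int f * r) \<Longrightarrow> f4_act f r x = x" by (simp add: f4_act_def)
lemma act_odd: "odd (int f * r) \<Longrightarrow> f4_act f r x = f4_sq x" by (simp add: f4_act_def)

lemma mact_even: "even (int f * r) \<Longrightarrow> mact f r M = M"
  unfolding mact_def by (simp add: f4_act_def)

lemma act_add: "f4_act f r (f4_act f r' x) = f4_act f (r + r') x"
  by (auto simp: f4_act_def sq_sq algebra_simps)

lemma mact_mact: "mact f r (mact f r' M) = mact f (r + r') M"
  unfolding mact_def by (simp add: act_add)

lemma act_addF: "f4_act f r (x + y) = f4_act f r x + f4_act f r y"
  by (simp add: f4_act_def sq_add)
lemma act_mulF: "f4_act f r (x * y) = f4_act f r x * f4_act f r y"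
  by (simp add: f4_act_def sq_mul)
lemma act_0': "f4_act f r 0 = 0"
  using act_0 by (simp add: F0_eq)

lemma mact_mmul: "mact f r (mmul A B) = mmul (mact f r A) (mact f r B)"
  unfolding mact_def mmul_def by (rule ext)+ (simp add: f4_add_eq f4_mul_eq act_addF act_mulF act_0' act_0)

lemma Q_act: "gm a b c \<in> Qgrp \<Longrightarrow> gm (f4_act f r a) (f4_act f r b) (f4_act f r c) \<in> Qgrp"
  unfolding gm_Q f4_act_def
  by (cases a; cases b; cases c) (auto simp: f4_sq_def f4_cube_def)

lemma Q_mult: "gm a b c \<in> Qgrp \<Longrightarrow> gm a' b' c' \<in> Qgrp \<Longrightarrow>
   gm (a*a') (a*b' + b*f4_sq a') (a*c' + b*f4_sq b' + c*a') \<in> Qgrp"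
  unfolding gm_Q plus_F4_def times_F4_def
  by (cases a; cases b; cases c; simp add: f4_sq_def f4_cube_def;
      cases a'; cases b'; cases c'; simp add: f4_sq_def f4_cube_def)


lemmas gcomp = gm_mult times_F4_def plus_F4_def f4_sq_def

lemma Q_closed: "M \<in> Qgrp \<Longrightarrow> N \<in> Qgrp \<Longrightarrow> mmul M N \<in> Qgrp"
  using Qgrp_gm Q_mult gm_mult by metis

lemma Q_mact: "M \<in> Qgrp \<Longrightarrow> mact f r M \<in> Qgrp"
  using Qgrp_gm Q_act mact_gm by metis

lemma G_closed: "x \<in> Gset f \<Longrightarrow> y \<in> Gset f \<Longrightarrow> gmul f x y \<in> Gset f"
  unfolding Gset_def gmul_def by (auto intro!: Q_closed Q_mact)

lemma gmul_assoc: "gmul f (gmul f x y) z = gmul f x (gmul f y z)"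
  unfolding gmul_def by (simp add: mmul_assoc mact_mmul mact_mact add.assoc)

lemma sq0': "f4_sq 0 = 0" and sq1': "f4_sq 1 = 1"
  by (simp_all add: f4_sq_def zero_F4_def one_F4_def)

lemma one3_right: assumes "M \<in> Qgrp" shows "mmul M one3 = M"
proof -
  obtain a b c where "M = gm a b c" using Qgrp_gm[OF assms] by blast
  then show ?thesis by (simp add: one3_def gm_mult F0_eq F1_eq sq0' sq1')
qed

lemma one3_left: assumes "M \<in> Qgrp" shows "mmul one3 M = M"
proof -
  obtain a b c where "M = gm a b c" using Qgrp_gm[OF assms] by blast
  then show ?thesis by (simp add: one3_def gm_mult F0_eq F1_eq sq0' sq1')
qed

lemma mact_one3: "mact f r one3 = one3"
  by (simp add: one3_def mact_gm f4_act_def f4_sq_def)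

lemma one3_Q: "one3 \<in> Qgrp"
  by (simp add: one3_def gm_Q f4_sq_def f4_cube_def)

lemma Q8_enum: "gm F1 b c \<in> Qgrp \<Longrightarrow> (b, c) \<in> {(F0,F0),(F0,F1),(F1,Fz),(F1,Fz2),(Fz,Fz),(Fz,Fz2),(Fz2,Fz),(Fz2,Fz2)}"
  unfolding gm_Q by (cases b; cases c) (auto simp: f4_sq_def f4_cube_def)

lemma Q_decomp: "gm a b c \<in> Qgrp \<Longrightarrow>
   gm a b c = mmul (gm F1 (b*a) (c*a*a)) (gm a F0 F0) \<and> gm F1 (b*a) (c*a*a) \<in> Qgrp
   \<and> a \<in> {F1, Fz, Fz2}"
  unfolding gm_Q gm_mult times_F4_def plus_F4_def gm_inj
  by (cases a; cases b; cases c) (auto simp: f4_sq_def f4_cube_def)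

lemma det_Q:
  fixes D :: "mat3 \<Rightarrow> 'k::field"
  assumes mult: "\<And>M N. M \<in> Qgrp \<Longrightarrow> N \<in> Qgrp \<Longrightarrow> D (mmul M N) = D M * D N"
    and nz: "D (gm F1 F1 Fz) \<noteq> 0" and c1: "D (gm Fz F0 F0) = 1"
    and M: "M \<in> Qgrp"
  shows "D M = 1"
proof -
  have Qs: "gm F1 F1 Fz \<in> Qgrp" "gm F1 Fz2 Fz \<in> Qgrp" "gm F1 Fz Fz \<in> Qgrp" "gm Fz F0 F0 \<in> Qgrp"
     "gm F1 F0 F1 \<in> Qgrp" "gm F1 F0 F0 \<in> Qgrp" "gm Fz2 F0 F0 \<in> Qgrp"
    by (simp_all add: gm_Q f4_sq_def f4_cube_def)
  have p1: "mmul (gm Fz F0 F0) (gm F1 F1 Fz) = mmul (gm F1 Fz2 Fz) (gm Fz F0 F0)"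
    "mmul (gm Fz F0 F0) (gm F1 Fz2 Fz) = mmul (gm F1 Fz Fz) (gm Fz F0 F0)"
    "mmul (gm F1 F1 Fz) (gm F1 Fz2 Fz) = gm F1 Fz Fz"
    "mmul (gm F1 F1 Fz) (gm F1 F1 Fz) = gm F1 F0 F1"
    "mmul (gm F1 F0 F1) (gm F1 F0 F1) = gm F1 F0 F0"
    "mmul (gm Fz F0 F0) (gm Fz F0 F0) = gm Fz2 F0 F0"
    "mmul (gm F1 F0 F1) (gm F1 F1 Fz) = gm F1 F1 Fz2"
    "mmul (gm F1 F0 F1) (gm F1 Fz2 Fz) = gm F1 Fz2 Fz2"
    "mmul (gm F1 F0 F1) (gm F1 Fz Fz) = gm F1 Fz Fz2"
    by (simp_all add: gcomp)
  have dij: "D (gm F1 F1 Fz) = D (gm F1 Fz2 Fz)"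
    using mult[OF Qs(4) Qs(1)] mult[OF Qs(2) Qs(4)] p1(1) c1 by simp
  have djk: "D (gm F1 Fz2 Fz) = D (gm F1 Fz Fz)"
    using mult[OF Qs(4) Qs(2)] mult[OF Qs(3) Qs(4)] p1(2) c1 by simp
  have "D (gm F1 Fz Fz) = D (gm F1 F1 Fz) * D (gm F1 F1 Fz)"
    using mult[OF Qs(1) Qs(2)] p1(3) dij by simp
  hence "D (gm F1 F1 Fz) * 1 = D (gm F1 F1 Fz) * D (gm F1 F1 Fz)" using djk dij by simp
  hence di: "D (gm F1 F1 Fz) = 1" using nz by (metis mult_left_cancel)
  have dj: "D (gm F1 Fz2 Fz) = 1" and dk: "D (gm F1 Fz Fz) = 1" using di dij djk by auto
  have dz: "D (gm F1 F0 F1) = 1" using mult[OF Qs(1) Qs(1)] p1(4) di by simp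
  have de: "D (gm F1 F0 F0) = 1" using mult[OF Qs(5) Qs(5)] p1(5) dz by simp
  have dc2: "D (gm Fz2 F0 F0) = 1" using mult[OF Qs(4) Qs(4)] p1(6) c1 by simp
  have d5: "D (gm F1 F1 Fz2) = 1" using mult[OF Qs(5) Qs(1)] p1(7) di dz by simp
  have d6: "D (gm F1 Fz2 Fz2) = 1" using mult[OF Qs(5) Qs(2)] p1(8) dj dz by simp
  have d7: "D (gm F1 Fz Fz2) = 1" using mult[OF Qs(5) Qs(3)] p1(9) dk dz by simp
  have q8: "D (gm F1 b c) = 1" if "gm F1 b c \<in> Qgrp" for b c
    using Q8_enum[OF that] di dj dk dz de d5 d6 d7 by fastforce
  obtain a b c where Mg: "M = gm a b c" and Mq: "gm a b c \<in> Qgrp" using Qgrp_gm[OF M] by blast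
  note dd = Q_decomp[OF Mq]
  have da: "D (gm a F0 F0) = 1" using dd de c1 dc2 by auto
  have qa: "gm a F0 F0 \<in> Qgrp" using dd Qs(4,6,7) by auto
  have "D M = D (gm F1 (b*a) (c*a*a)) * D (gm a F0 F0)"
    using Mg dd mult[OF _ qa] by metis
  then show ?thesis using q8 dd da by simp
qed


section \<open>2x2 matrices\<close>

lemma mat2_eq: "(A::'k::field^2^2) = B \<longleftrightarrow>
   A$1$1 = B$1$1 \<and> A$1$2 = B$1$2 \<and> A$2$1 = B$2$1 \<and> A$2$2 = B$2$2"
  by (auto simp: vec_eq_iff forall_2)

lemma mm2: "((A::'k::field^2^2) ** B) $ i $ j = A$i$1 * B$1$j + A$i$2 * B$2$j"
  by (simp add: matrix_matrix_mult_def sum_2)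

lemma trace2: "trace (A::'k::field^2^2) = A$1$1 + A$2$2"
  by (simp add: trace_def sum_2)

lemma mat_comp: "(mat x :: 'k::field^2^2) $ i $ j = (if i = j then x else 0)"
  by (simp add: mat_def)

lemma det_mat2: "det (mat x :: 'k::field^2^2) = x * x"
  by (simp add: det_2 mat_def)

lemma idem_inv: assumes "invertible (A::'k::field^2^2)" "A ** A = A" shows "A = mat 1"
proof -
  obtain A' where h: "A' ** A = mat 1" "A ** A' = mat 1" using assms(1) invertible_def by blast
  have "A = A ** (A ** A')" using h by simp
  also have "\<dots> = (A ** A) ** A'" by (simp add: matrix_mul_assoc)
  also have "\<dots> = mat 1" using assms(2) h by simp
  finally show ?thesis .
qed

lemma cube_trace:
  fixes A :: "'k::field_char_0^2^2"
  assumes "A ** A ** A = mat 1" "trace A = -1"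
  shows "det A = 1"
proof -
  define a b c d where "a = A$1$1" "b = A$1$2" "c = A$2$1" "d = A$2$2"
  have t: "a + d = -1" using assms(2) by (simp add: trace2 a_b_c_d_def)
  have e: "(A ** A ** A)$1$1 = 1" "(A ** A ** A)$2$2 = 1" "(A ** A ** A)$1$2 = 0" "(A ** A ** A)$2$1 = 0"
    using assms(1) by (simp_all add: mat_comp)
  have x1: "(A ** A ** A)$1$1 = ((a+d)^2 - (a*d-b*c))*a - (a+d)*(a*d-b*c)"
    and x2: "(A ** A ** A)$2$2 = ((a+d)^2 - (a*d-b*c))*d - (a+d)*(a*d-b*c)"
    by (simp_all add: mm2 a_b_c_d_def power2_eq_square algebra_simps)
  have dt: "det A = a*d - b*c" by (simp add: det_2 a_b_c_d_def)
  have g1: "(1 - (a*d-b*c))*a + (a*d-b*c) = 1" using e(1) x1 t by (simp add: algebra_simps)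
  have g2: "(1 - (a*d-b*c))*d + (a*d-b*c) = 1" using e(2) x2 t by (simp add: algebra_simps)
  have h1: "(1 - (a*d-b*c))*(a-1) = (1 - (a*d-b*c))*a + (a*d-b*c) - 1"
    and h2: "(1 - (a*d-b*c))*(d-1) = (1 - (a*d-b*c))*d + (a*d-b*c) - 1"
    by (simp_all add: algebra_simps)
  have f1: "(1 - det A) * (a - 1) = 0" using g1 h1 dt by simp
  have f2: "(1 - det A) * (d - 1) = 0" using g2 h2 dt by simp
  show ?thesis
  proof (rule ccontr)
    assume "det A \<noteq> 1"
    hence "a = 1" "d = 1" using f1 f2 by auto
    hence "(3::'k) = 0" using t by simp
    thus False by simp
  qed
qed


lemma int_hom:
  fixes h :: "int \<Rightarrow> 'k::field"
  assumes h0: "h 0 = 1" and hs: "\<And>n. h (n + 1) = h n * a" and a: "a \<noteq> 0"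
  shows "h n = a powi n"
proof (induction n rule: int_induct[where k = 0])
  case base then show ?case using h0 by simp
next
  case (step1 i) then show ?case using hs a by (simp add: power_int_add_1)
next
  case (step2 i)
  have "h i = h (i - 1) * a" using hs[of "i - 1"] by simp
  hence "h (i - 1) = h i / a" using a by simp
  also have "\<dots> = a powi (i - 1)" using step2 a
    by (simp add: power_int_diff)
  finally show ?case .
qed

lemma assemble:
  fixes \<rho> :: "mat3 \<times> int \<Rightarrow> 'k::field^2^2" and q :: 'k
  assumes mult: "\<forall>x\<in>Gset f. \<forall>y\<in>Gset f. \<rho> (gmul f x y) = \<rho> x ** \<rho> y"
    and e: "\<rho> (one3, 0) = mat 1"
    and inv: "det (\<rho> (gm F1 F1 Fz, 0)) \<noteq> 0"
    and c1: "det (\<rho> (gm Fz F0 F0, 0)) = 1"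
    and h1: "det (\<rho> (one3, 1)) = inverse q" and q: "q \<noteq> 0"
  shows "\<forall>x\<in>Gset f. det (\<rho> x) = q powi (- snd x)"
proof
  fix x assume x: "x \<in> Gset f"
  obtain M n where xe: "x = (M, n)" by (cases x)
  have M: "M \<in> Qgrp" using x xe by (simp add: Gset_def)
  have G: "\<And>N m. N \<in> Qgrp \<Longrightarrow> (N, m) \<in> Gset f" by (simp add: Gset_def)
  have m0: "\<And>N. mact f 0 N = N" by (simp add: mact_even)
  have DM: "det (\<rho> (M, 0)) = 1"
  proof (rule det_Q[where D = "\<lambda>M. det (\<rho> (M, 0))"])
    fix A B assume "A \<in> Qgrp" "B \<in> Qgrp"
    then have "\<rho> (gmul f (A, 0) (B, 0)) = \<rho> (A, 0) ** \<rho> (B, 0)" using mult G by blast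
    then show "det (\<rho> (mmul A B, 0)) = det (\<rho> (A, 0)) * det (\<rho> (B, 0))"
      by (simp add: gmul_def m0 det_mul)
  qed (use inv c1 M in auto)
  define h where "h n = det (\<rho> (one3, n))" for n
  have hs: "h (n + 1) = h n * inverse q" for n
  proof -
    have "\<rho> (gmul f (one3, n) (one3, 1)) = \<rho> (one3, n) ** \<rho> (one3, 1)" using mult G one3_Q by blast
    then show ?thesis using h1 by (simp add: gmul_def h_def mact_one3 one3_right[OF one3_Q] det_mul)
  qed
  have h0: "h 0 = 1" by (simp add: h_def e)
  have hn: "h n = (inverse q) powi n" using int_hom[of h, OF h0 hs] q by simp
  have "\<rho> (gmul f (M, 0) (one3, n)) = \<rho> (M, 0) ** \<rho> (one3, n)" using mult G M one3_Q by blast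
  hence "det (\<rho> (M, n)) = h n" using DM by (simp add: gmul_def h_def m0 one3_right[OF M] det_mul)
  then show "det (\<rho> x) = q powi (- snd x)" using hn xe by (simp add: power_int_minus power_int_inverse)
qed


lemma cc_facts:
  "mmul (gm Fz F0 F0) (gm Fz F0 F0) = gm Fz2 F0 F0"
  "mmul (gm Fz2 F0 F0) (gm Fz F0 F0) = one3"
  "gm Fz F0 F0 \<in> Qgrp" "gm Fz2 F0 F0 \<in> Qgrp"
  by (simp_all add: gcomp one3_def gm_Q f4_sq_def f4_cube_def)

lemma even_case:
  fixes s :: "'k::field_char_0" and \<rho> :: "mat3 \<times> int \<Rightarrow> 'k^2^2"
  assumes ev: "even f" and s2: "s ^ 2 = -2" and tq: "tau_q_even f s \<phi> \<rho>"
  shows "\<forall>x\<in>Gset f. det (\<rho> x) = of_nat (2 ^ f) powi (- snd x)"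
proof (rule assemble)
  have rep: "is_rep2 (gmul f) (Gset f) \<rho>" using tq by (simp add: tau_q_even_def)
  then show mult: "\<forall>x\<in>Gset f. \<forall>y\<in>Gset f. \<rho> (gmul f x y) = \<rho> x ** \<rho> y"
    by (simp add: is_rep2_def)
  have G: "\<And>N m. N \<in> Qgrp \<Longrightarrow> (N, m) \<in> Gset f" by (simp add: Gset_def)
  have m0: "\<And>N. mact f 0 N = N" by (simp add: mact_even)
  have invt: "\<And>N m. N \<in> Qgrp \<Longrightarrow> invertible (\<rho> (N, m))" using rep G by (simp add: is_rep2_def)
  have "\<rho> (gmul f (one3, 0) (one3, 0)) = \<rho> (one3, 0) ** \<rho> (one3, 0)" using mult G one3_Q by blast
  then show e: "\<rho> (one3, 0) = mat 1"
    by (intro idem_inv invt one3_Q) (simp add: gmul_def m0 one3_right[OF one3_Q])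
  have "invertible (\<rho> (gm F1 F1 Fz, 0))" by (rule invt) (simp add: gm_Q f4_sq_def f4_cube_def)
  then show "det (\<rho> (gm F1 F1 Fz, 0)) \<noteq> 0" using invertible_det_nz by blast
  have c2: "\<rho> (gm Fz2 F0 F0, 0) = \<rho> (gm Fz F0 F0, 0) ** \<rho> (gm Fz F0 F0, 0)"
    using mult G cc_facts gmul_def[of f "(gm Fz F0 F0, 0)" "(gm Fz F0 F0, 0)"] m0 by (metis fst_conv snd_conv add_0)
  have c3: "\<rho> (one3, 0) = \<rho> (gm Fz2 F0 F0, 0) ** \<rho> (gm Fz F0 F0, 0)"
    using mult G cc_facts gmul_def[of f "(gm Fz2 F0 F0, 0)" "(gm Fz F0 F0, 0)"] m0 by (metis fst_conv snd_conv add_0)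
  have "trace (\<rho> (gm Fz F0 F0, 0)) = -1" using tq by (simp add: tau_q_even_def)
  then show "det (\<rho> (gm Fz F0 F0, 0)) = 1"
    using cube_trace c2 c3 e by metis
  have "\<rho> (one3, 1) = mat (inverse (s ^ f))" using tq by (simp add: tau_q_even_def one3_def)
  hence "det (\<rho> (one3, 1)) = inverse (s ^ f) * inverse (s ^ f)" by (simp add: det_mat2)
  also have "\<dots> = inverse ((s ^ 2) ^ f)" by (simp add: power_mult_distrib power2_eq_square flip: inverse_mult_distrib)
  also have "\<dots> = inverse (2 ^ f)" using ev s2 by (simp add: power_minus_even)
  finally show "det (\<rho> (one3, 1)) = inverse (of_nat (2 ^ f))" by simp
qed simp


lemma CH2: "((A::'k::field^2^2) ** A) $ k $ l = trace A * A $ k $ l - (if k = l then det A else 0)"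
proof -
  have "k = 1 \<or> k = 2" "l = 1 \<or> l = 2" using exhaust_2 by blast+
  then show ?thesis by (auto simp: mm2 trace2 det_2 algebra_simps)
qed

lemma mat_ml: "(mat a ** (B::'k::field^2^2)) $ k $ l = a * B $ k $ l"
proof -
  have "k = 1 \<or> k = 2" using exhaust_2 by blast
  then show ?thesis by (auto simp: mm2 mat_comp)
qed

lemma mat_mr: "((B::'k::field^2^2) ** mat a) $ k $ l = B $ k $ l * a"
proof -
  have "l = 1 \<or> l = 2" using exhaust_2 by blast
  then show ?thesis by (auto simp: mm2 mat_comp)
qed

lemma eta4:
  fixes s \<eta> q :: "'k::field"
  assumes "odd f" "s ^ 2 = -2" "\<eta>^2 + s ^ (f + 1) * \<eta> + q = 0" "q = 2 ^ f"
  shows "\<eta>^4 = - (q^2)"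
proof -
  define S where "S = s ^ (f + 1)"
  have "S^2 = (s^2) ^ (f + 1)" unfolding S_def by (metis power_mult mult.commute)
  also have "\<dots> = 2 ^ (f + 1)" using assms(1,2) by (simp add: power_minus_even)
  finally have S2: "S^2 = 2 * q" using assms(4) by simp
  have h: "\<eta>^2 + S * \<eta> + q = 0" using assms(3) by (simp add: S_def)
  have hh: "\<eta>^2 + S * \<eta> = - q" using h by (simp add: eq_neg_iff_add_eq_0)
  have e2: "\<eta>^2 = - q - S * \<eta>" using hh by (simp add: eq_diff_eq)
  have "\<eta>^4 = (\<eta>^2)^2" by simp
  also have "\<dots> = (- q - S * \<eta>)^2" using e2 by simp
  also have "\<dots> = S^2 * \<eta>^2 + 2 * S * \<eta> * q + q^2" by (simp add: power2_eq_square algebra_simps)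
  also have "\<dots> = 2 * q * (\<eta>^2 + S * \<eta>) + q^2" using S2 by (simp add: algebra_simps)
  also have "\<dots> = 2 * q * (- q) + q^2" by (simp only: hh)
  also have "\<dots> = - (q^2)" by (simp add: power2_eq_square)
  finally show ?thesis .
qed

section \<open>Odd case\<close>

lemma transl_lin: "transl f x (\<lambda>y. u * F y + v * H y) = (\<lambda>y. u * transl f x F y + v * transl f x H y)"
  by (rule ext) (simp add: transl_def)

lemma transl_comp: "x \<in> Gset f \<Longrightarrow> transl f x (transl f x' F) = transl f (gmul f x x') F"
  by (rule ext) (simp add: transl_def G_closed gmul_assoc)

lemma C4_eq: "C4 = {one3, gm F1 F1 Fz, gm F1 F0 F1, gm F1 F1 Fz2}"
proof -
  have m1: "mpow (gm F1 F1 Fz) 1 = gm F1 F1 Fz"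
    by (simp add: one3_def gcomp)
  have m2: "mpow (gm F1 F1 Fz) 2 = gm F1 F0 F1"
    by (simp add: numeral_2_eq_2 one3_def gcomp)
  have m3: "mpow (gm F1 F1 Fz) 3 = gm F1 F1 Fz2"
    by (simp add: numeral_3_eq_3 one3_def gcomp)
  have e: "{k::nat. k < 4} = {0,1,2,3}" by auto
  have "C4 = mpow (gm F1 F1 Fz) ` {k. k < 4}"
    unfolding C4_def by blast
  hence "C4 = mpow (gm F1 F1 Fz) ` {0,1,2,3}" by (simp only: e)
  then show ?thesis by (simp only: image_insert image_empty m1 m2 m3 mpow.simps(1))
qed

lemma gm_ne: "gm a b c \<noteq> gm a' b' c' \<longleftrightarrow> \<not>(a = a' \<and> b = b' \<and> c = c')"
  by (simp add: gm_inj)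

lemma Cgrp_mem: "(M, n) \<in> Cgrp f \<longleftrightarrow> M \<in> Qgrp \<and> (\<exists>b c. M = gm F1 b c) \<and> (even n \<longleftrightarrow> M \<in> C4)"
  unfolding Cgrp_def Q8_def by auto

lemma odd_case:
  fixes s :: "'k::field_char_0" and \<rho> :: "mat3 \<times> int \<Rightarrow> 'k^2^2"
  assumes od: "odd f" and s2: "s ^ 2 = -2" and tq: "tau_q_odd f s \<phi> \<eta> \<phi>1 \<phi>2 \<Psi> B1 B2 \<rho>"
  shows "\<forall>x\<in>Gset f. det (\<rho> x) = of_nat (2 ^ f) powi (- snd x)"
proof -
  define q :: 'k where "q = of_nat (2 ^ f)"
  have q0: "q \<noteq> 0" by (simp add: q_def)
  define K where "K = {F \<in> Ind f (Cgrp f) \<phi>1. (\<forall>y. \<Psi> F y = 0)}"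
  have eta: "\<eta>^2 + s ^ (f + 1) * \<eta> + q = 0"
    and chr: "is_character (gmul f) (Cgrp f) \<phi>1"
    and ph1: "\<phi>1 (gm F1 Fz Fz, 1) = \<eta> / q"
    and ph2: "\<phi>1 (gm F1 F0 F0, 2) = - 1 / q"
    and BK: "B1 \<in> K" "B2 \<in> K"
    and li: "\<forall>a b. (\<lambda>y. a * B1 y + b * B2 y) = (\<lambda>y. 0) \<longrightarrow> a = 0 \<and> b = 0"
    and tr: "\<forall>x\<in>Gset f. transl f x B1 = (\<lambda>y. \<rho> x $ 1 $ 1 * B1 y + \<rho> x $ 2 $ 1 * B2 y)
                 \<and> transl f x B2 = (\<lambda>y. \<rho> x $ 1 $ 2 * B1 y + \<rho> x $ 2 $ 2 * B2 y)"
    using tq unfolding tau_q_odd_def Let_def q_def K_def by blast+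
  have BI: "B1 \<in> Ind f (Cgrp f) \<phi>1" "B2 \<in> Ind f (Cgrp f) \<phi>1" using BK by (simp_all add: K_def)
  have coef: "a = a' \<and> b = b'" if "(\<lambda>y. a * B1 y + b * B2 y) = (\<lambda>y. a' * B1 y + b' * B2 y)" for a b a' b'
  proof -
    have "(\<lambda>y. (a - a') * B1 y + (b - b') * B2 y) = (\<lambda>y. 0)"
    proof
      fix y have "a * B1 y + b * B2 y = a' * B1 y + b' * B2 y" using that by metis
      then show "(a - a') * B1 y + (b - b') * B2 y = 0" by (simp add: algebra_simps)
    qed
    then show ?thesis using li by fastforce
  qed
  have G: "\<And>N m. N \<in> Qgrp \<Longrightarrow> (N, m) \<in> Gset f" by (simp add: Gset_def)
  have act: "transl f x (\<lambda>y. u * B1 y + v * B2 y) =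
      (\<lambda>y. (\<rho> x $ 1 $ 1 * u + \<rho> x $ 1 $ 2 * v) * B1 y + (\<rho> x $ 2 $ 1 * u + \<rho> x $ 2 $ 2 * v) * B2 y)" if "x \<in> Gset f" for x u v
    using tr that by (simp add: transl_lin algebra_simps)
  have mult: "\<forall>x\<in>Gset f. \<forall>y\<in>Gset f. \<rho> (gmul f x y) = \<rho> x ** \<rho> y"
  proof (intro ballI)
    fix x y assume x: "x \<in> Gset f" and y: "y \<in> Gset f"
    have xy: "gmul f x y \<in> Gset f" using G_closed x y .
    have col: "\<rho> (gmul f x y) $ 1 $ j = (\<rho> x ** \<rho> y) $ 1 $ j \<and> \<rho> (gmul f x y) $ 2 $ j = (\<rho> x ** \<rho> y) $ 2 $ j"
      if tj: "\<And>z. z \<in> Gset f \<Longrightarrow> transl f z Bj = (\<lambda>w. \<rho> z $ 1 $ j * B1 w + \<rho> z $ 2 $ j * B2 w)"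
      for j :: 2 and Bj
    proof -
      have "transl f (gmul f x y) Bj = transl f x (transl f y Bj)" using transl_comp[OF x] by metis
      also have "\<dots> = transl f x (\<lambda>w. \<rho> y $ 1 $ j * B1 w + \<rho> y $ 2 $ j * B2 w)" using tj[OF y] by simp
      also have "\<dots> = (\<lambda>w. (\<rho> x ** \<rho> y) $ 1 $ j * B1 w + (\<rho> x ** \<rho> y) $ 2 $ j * B2 w)"
        by (subst act[OF x]) (simp add: mm2 algebra_simps)
      finally have "(\<lambda>w. \<rho> (gmul f x y) $ 1 $ j * B1 w + \<rho> (gmul f x y) $ 2 $ j * B2 w) =
          (\<lambda>w. (\<rho> x ** \<rho> y) $ 1 $ j * B1 w + (\<rho> x ** \<rho> y) $ 2 $ j * B2 w)"
        by (simp only: tj[OF xy])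
      then show ?thesis by (rule coef)
    qed
    have t1: "\<And>z. z \<in> Gset f \<Longrightarrow> transl f z B1 = (\<lambda>w. \<rho> z $ 1 $ 1 * B1 w + \<rho> z $ 2 $ 1 * B2 w)"
      using tr by blast
    have t2: "\<And>z. z \<in> Gset f \<Longrightarrow> transl f z B2 = (\<lambda>w. \<rho> z $ 1 $ 2 * B1 w + \<rho> z $ 2 $ 2 * B2 w)"
      using tr by blast
    show "\<rho> (gmul f x y) = \<rho> x ** \<rho> y"
      using col[OF t1] col[OF t2] by (simp add: mat2_eq)
  qed
  have scal: "\<rho> x = mat \<alpha>" if x: "x \<in> Gset f" and t1: "transl f x B1 = (\<lambda>y. \<alpha> * B1 y)"
     and t2: "transl f x B2 = (\<lambda>y. \<alpha> * B2 y)" for x \<alpha>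
  proof -
    have r1: "transl f x B1 = (\<lambda>y. \<rho> x $ 1 $ 1 * B1 y + \<rho> x $ 2 $ 1 * B2 y)"
      and r2: "transl f x B2 = (\<lambda>y. \<rho> x $ 1 $ 2 * B1 y + \<rho> x $ 2 $ 2 * B2 y)" using tr x by blast+
    have z1: "(\<lambda>y. \<alpha> * B1 y + 0 * B2 y) = transl f x B1" and z2: "(\<lambda>y. 0 * B1 y + \<alpha> * B2 y) = transl f x B2"
      using t1 t2 by simp_all
    have "\<rho> x $ 1 $ 1 = \<alpha> \<and> \<rho> x $ 2 $ 1 = 0" using coef[OF trans[OF r1[symmetric] z1[symmetric]]] by simp
    moreover have "\<rho> x $ 1 $ 2 = 0 \<and> \<rho> x $ 2 $ 2 = \<alpha>" using coef[OF trans[OF r2[symmetric] z2[symmetric]]] by simp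
    ultimately show ?thesis by (simp add: mat2_eq mat_comp)
  qed
  have central: "\<rho> h = mat (\<phi>1 h)" if h: "h \<in> Cgrp f" "h \<in> Gset f"
       and c: "\<And>y. y \<in> Gset f \<Longrightarrow> gmul f y h = gmul f h y" for h
  proof (rule scal[OF h(2)])
    have "transl f h B = (\<lambda>y. \<phi>1 h * B y)" if "B \<in> Ind f (Cgrp f) \<phi>1" for B
    proof
      fix y show "transl f h B y = \<phi>1 h * B y"
      proof (cases "y \<in> Gset f")
        case True
        then have "B (gmul f h y) = \<phi>1 h * B y" using that h by (simp add: Ind_def)
        then show ?thesis using True c by (simp add: transl_def)
      next
        case False
        then have "B y = 0" using that unfolding Ind_def by blast
        then show ?thesis using False by (simp add: transl_def)
      qed
    qed
    then show "transl f h B1 = (\<lambda>y. \<phi>1 h * B1 y)" "transl f h B2 = (\<lambda>y. \<phi>1 h * B2 y)"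
      using BI by auto
  qed
  have a1: "\<And>x. f4_act f 1 x = f4_sq x" using od by (simp add: f4_act_def)
  have a0: "\<And>n x. even n \<Longrightarrow> f4_act f n x = x" by (simp add: f4_act_def)
  have Qs: "gm F1 F0 F1 \<in> Qgrp" "gm F1 F1 Fz \<in> Qgrp" "gm F1 F1 Fz2 \<in> Qgrp" "gm F1 Fz Fz \<in> Qgrp"
     "gm Fz F0 F0 \<in> Qgrp" "gm Fz2 F0 F0 \<in> Qgrp"
    by (simp_all add: gm_Q f4_sq_def f4_cube_def)
  have gc: "gmul f (gm F1 Fz Fz, 1) (gm F1 Fz Fz, 1) = (gm F1 F1 Fz, 2)"
    "gmul f (gm F1 F1 Fz, 2) (gm F1 F1 Fz, 2) = (gm F1 F0 F1, 4)"
    "gmul f (one3, 2) (one3, 2) = (one3, 4)"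
    "gmul f (gm F1 F0 F1, 0) (one3, 4) = (gm F1 F0 F1, 4)"
    "gmul f (one3, 1) (one3, 1) = (one3, 2)"
    "gmul f (one3, 1) (gm Fz F0 F0, 0) = (gm Fz2 F0 F0, 1)"
    "gmul f (gm Fz2 F0 F0, 0) (one3, 1) = (gm Fz2 F0 F0, 1)"
    "gmul f (gm F1 F1 Fz, 0) (one3, 1) = (gm F1 F1 Fz, 1)"
    "gmul f (one3, 1) (gm F1 F1 Fz, 0) = (gm F1 F1 Fz2, 1)"
    "gmul f (gm F1 F1 Fz2, 0) (one3, 1) = (gm F1 F1 Fz2, 1)"
    "gmul f (gm F1 F0 F1, 0) (gm F1 F1 Fz2, 0) = (gm F1 F1 Fz, 0)"
    "gmul f (gm F1 F1 Fz, 0) (gm F1 F1 Fz, 0) = (gm F1 F0 F1, 0)"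
    "gmul f (gm Fz F0 F0, 0) (gm Fz F0 F0, 0) = (gm Fz2 F0 F0, 0)"
    "gmul f (gm Fz2 F0 F0, 0) (gm Fz F0 F0, 0) = (one3, 0)"
    by (simp_all add: gmul_def mact_gm a1 a0 gcomp one3_def)
  have Cm: "(gm F1 Fz Fz, 1) \<in> Cgrp f" "(gm F1 F1 Fz, 2) \<in> Cgrp f" "(gm F1 F0 F1, 4) \<in> Cgrp f"
     "(one3, 4) \<in> Cgrp f" "(one3, 2) \<in> Cgrp f" "(gm F1 F0 F1, 0) \<in> Cgrp f"
    by (simp_all add: Cgrp_mem C4_eq gm_Q f4_sq_def f4_cube_def one3_def gm_inj)
  have cm: "\<And>x y. x \<in> Cgrp f \<Longrightarrow> y \<in> Cgrp f \<Longrightarrow> \<phi>1 (gmul f x y) = \<phi>1 x * \<phi>1 y"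
    using chr by (simp add: is_character_def)
  have "\<phi>1 (gm F1 F0 F1, 4) = (\<eta> / q) ^ 4"
    using cm[OF Cm(1) Cm(1)] cm[OF Cm(2) Cm(2)] gc(1,2) ph1 by (simp add: power4_eq_xxxx mult.assoc)
  moreover have "\<phi>1 (one3, 4) = (1 / q)^2"
    using cm[OF Cm(5) Cm(5)] gc(3) ph2 by (simp add: one3_def power2_eq_square)
  moreover have "\<phi>1 (gm F1 F0 F1, 4) = \<phi>1 (gm F1 F0 F1, 0) * \<phi>1 (one3, 4)"
    using cm[OF Cm(6) Cm(4)] gc(4) by simp
  ultimately have "\<phi>1 (gm F1 F0 F1, 0) = \<eta>^4 / q^2" using q0
    by (simp add: field_simps power2_eq_square power4_eq_xxxx)
  moreover have "\<eta>^4 = - (q^2)" using eta4[OF od s2 eta] by (simp add: q_def)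
  ultimately have phz: "\<phi>1 (gm F1 F0 F1, 0) = -1" using q0 by simp
  have Gs: "(one3, 2) \<in> Gset f" "(gm F1 F0 F1, 0) \<in> Gset f" "(one3, 1) \<in> Gset f"
    using G one3_Q Qs by auto
  have rho2: "\<rho> (one3, 2) = mat (- 1 / q)"
  proof -
    have "\<rho> (one3, 2) = mat (\<phi>1 (one3, 2))"
    proof (rule central[OF Cm(5) Gs(1)])
      fix y assume "y \<in> Gset f"
      then obtain M n where y: "y = (M, n)" "M \<in> Qgrp" by (auto simp: Gset_def)
      show "gmul f y (one3, 2) = gmul f (one3, 2) y"
        using y by (simp add: gmul_def mact_one3 one3_right one3_left mact_even)
    qed
    then show ?thesis using ph2 by (simp add: one3_def)
  qed
  have rhoz: "\<rho> (gm F1 F0 F1, 0) = mat (- 1)"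
  proof -
    have "\<rho> (gm F1 F0 F1, 0) = mat (\<phi>1 (gm F1 F0 F1, 0))"
    proof (rule central[OF Cm(6) Gs(2)])
      fix y assume "y \<in> Gset f"
      then obtain M n where y0: "y = (M, n)" "M \<in> Qgrp" by (auto simp: Gset_def)
      then obtain a b c where "M = gm a b c" using Qgrp_gm by blast
      with y0 have y: "y = (gm a b c, n)" by simp
      have "\<And>r. f4_act f r F1 = F1" "\<And>r. f4_act f r F0 = F0" by (simp_all add: f4_act_def f4_sq_def)
      then show "gmul f y (gm F1 F0 F1, 0) = gmul f (gm F1 F0 F1, 0) y"
        using y a0 by (simp add: gmul_def mact_gm gm_mult F0_eq F1_eq sq0' sq1' algebra_simps)
    qed
    then show ?thesis using phz by simp
  qed
  define A where "A = \<rho> (one3, 1)"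
  have AA: "A ** A = mat (- 1 / q)" using mult Gs(3) gc(5) rho2 unfolding A_def by metis
  have dA: "det A * det A = (1 / q) * (1 / q)"
    using arg_cong[OF AA, of det] by (simp add: det_mul det_mat2)
  hence dA0: "det A \<noteq> 0" using q0 by auto
  have GQ: "\<And>M m. M \<in> Qgrp \<Longrightarrow> \<rho> (gmul f (M, 0) (one3, m)) = \<rho> (M, 0) ** \<rho> (one3, m)"
    using mult G one3_Q by blast
  have GQ2: "\<And>M m. M \<in> Qgrp \<Longrightarrow> \<rho> (gmul f (one3, m) (M, 0)) = \<rho> (one3, m) ** \<rho> (M, 0)"
    using mult G one3_Q by blast
  have GQ3: "\<And>M N. M \<in> Qgrp \<Longrightarrow> N \<in> Qgrp \<Longrightarrow> \<rho> (gmul f (M, 0) (N, 0)) = \<rho> (M, 0) ** \<rho> (N, 0)"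
    using mult G by blast
  have e: "\<rho> (one3, 0) = mat 1"
  proof (rule scal[OF G[OF one3_Q]])
    have "transl f (one3, 0) B = B" if "B \<in> Ind f (Cgrp f) \<phi>1" for B
    proof
      fix y show "transl f (one3, 0) B y = B y"
        using that by (cases y) (auto simp: transl_def Ind_def Gset_def gmul_def mact_one3 one3_right)
    qed
    then show "transl f (one3, 0) B1 = (\<lambda>y. 1 * B1 y)" "transl f (one3, 0) B2 = (\<lambda>y. 1 * B2 y)"
      using BI by auto
  qed
  have dz: "det (\<rho> (gm F1 F0 F1, 0)) = 1" using rhoz by (simp add: det_mat2)
  have di: "det (\<rho> (gm F1 F1 Fz, 0)) \<noteq> 0"
    using arg_cong[OF GQ3[OF Qs(2) Qs(2)], of det] gc(12) dz by (auto simp: det_mul)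
  have dc: "det (\<rho> (gm Fz F0 F0, 0)) = 1"
  proof -
    have "det (\<rho> (gm Fz2 F0 F0, 0)) * det (\<rho> (gm Fz F0 F0, 0)) = 1"
      using arg_cong[OF GQ3[OF Qs(6) Qs(5)], of det] gc(14) e by (simp add: det_mul)
    moreover have "det (\<rho> (gm Fz2 F0 F0, 0)) = det (\<rho> (gm Fz F0 F0, 0)) * det (\<rho> (gm Fz F0 F0, 0))"
      using arg_cong[OF GQ3[OF Qs(5) Qs(5)], of det] gc(13) by (simp add: det_mul)
    moreover have "det A * det (\<rho> (gm Fz F0 F0, 0)) = det (\<rho> (gm Fz2 F0 F0, 0)) * det A"
      using arg_cong[OF GQ2[OF Qs(5), of 1], of det] arg_cong[OF GQ[OF Qs(6), of 1], of det] gc(6,7)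
      unfolding A_def by (simp add: det_mul)
    ultimately show ?thesis using dA0
      by (metis mult.commute mult_cancel_left mult_cancel_right1 mult_zero_left zero_neq_one)
  qed
  have hA: "det A = inverse q"
  proof (cases "trace A = 0")
    case True
    have "(A ** A) $ 1 $ 1 = - det A" using CH2[of A 1 1] True by simp
    then show ?thesis using AA by (simp add: mat_comp field_simps)
  next
    case False
    define t where "t = trace A"
    have e12: "t * A $ 1 $ 2 = 0" "t * A $ 2 $ 1 = 0"
      using CH2[of A 1 2] CH2[of A 2 1] AA by (simp_all add: mat_comp t_def)
    have e11: "t * A $ 1 $ 1 - det A = t * A $ 2 $ 2 - det A"
      using CH2[of A 1 1] CH2[of A 2 2] AA by (simp add: mat_comp t_def)
    have t0: "t \<noteq> 0" using False t_def by simp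
    hence "A $ 1 $ 2 = 0" "A $ 2 $ 1 = 0" "A $ 1 $ 1 = A $ 2 $ 2" using e12 e11 by auto
    hence Am: "A = mat (A $ 1 $ 1)" by (simp add: mat2_eq mat_comp)
    define a where "a = A $ 1 $ 1"
    have a0: "a \<noteq> 0" using Am dA0 a_def by (metis det_mat2 mult_zero_left)
    define P where "P = \<rho> (gm F1 F1 Fz, 0)"
    define P' where "P' = \<rho> (gm F1 F1 Fz2, 0)"
    have c2: "A ** P = \<rho> (gm F1 F1 Fz2, 1)" using GQ2[OF Qs(2), of 1] gc(9) by (simp add: P_def A_def)
    have c3: "P' ** A = \<rho> (gm F1 F1 Fz2, 1)" using GQ[OF Qs(3), of 1] gc(10) by (simp add: P'_def A_def)
    have c4: "P = mat (-1) ** P'" using GQ3[OF Qs(1) Qs(3)] gc(11) rhoz by (simp add: P_def P'_def)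
    have Pz: "P $ k $ l = 0" for k l
    proof -
      have "a * P $ k $ l = P' $ k $ l * a" using c2 c3 Am a_def mat_ml[of a P k l] mat_mr[of P' a k l] by simp
      hence "P $ k $ l = P' $ k $ l" using a0 by (simp add: mult.commute)
      moreover have "P $ k $ l = - P' $ k $ l" using c4 mat_ml[of "-1" P' k l] by simp
      ultimately show ?thesis by simp
    qed
    have "det P = 0" by (simp add: det_2 Pz)
    then show ?thesis using di P_def by simp
  qed
  show ?thesis
    by (rule assemble[OF mult e di dc _ q0, unfolded q_def]) (simp add: A_def[symmetric] hA q_def)
qed


theorem lemma3p4:
  fixes f :: nat and s :: "'k::{alg_closed_field, field_char_0}" and \<phi> :: "mat3 \<Rightarrow> 'k"
  assumes "f \<ge> 1"
    and "s ^ 2 = -2"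
    and "faithful_char_C4 \<phi>"
  shows "(even f \<longrightarrow> (\<forall>\<rho>. tau_q_even f s \<phi> \<rho> \<longrightarrow>
            (\<forall>x\<in>Gset f. det (\<rho> x) = of_nat (2 ^ f) powi (- snd x))))
       \<and> (odd f \<longrightarrow> (\<forall>\<eta> \<phi>1 \<phi>2 \<Psi> B1 B2 \<rho>. tau_q_odd f s \<phi> \<eta> \<phi>1 \<phi>2 \<Psi> B1 B2 \<rho> \<longrightarrow>
            (\<forall>x\<in>Gset f. det (\<rho> x) = of_nat (2 ^ f) powi (- snd x))))"
proof (intro conjI impI allI)
  fix \<rho> assume "even f" "tau_q_even f s \<phi> \<rho>"
  then show "\<forall>x\<in>Gset f. det (\<rho> x) = of_nat (2 ^ f) powi (- snd x)"
    using even_case assms(2) by blast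
next
  fix \<eta> \<phi>1 \<phi>2 \<Psi> B1 B2 \<rho> assume "odd f" "tau_q_odd f s \<phi> \<eta> \<phi>1 \<phi>2 \<Psi> B1 B2 \<rho>"
  then show "\<forall>x\<in>Gset f. det (\<rho> x) = of_nat (2 ^ f) powi (- snd x)"
    using odd_case assms(2) by blast
qed

end
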